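(* Let $(\Omega(\mathcal{A}),d)$ be a differential calculus on a complex algebra $\mathcal{A}$ with $\mathcal{E}=\Omega^1(\mathcal{A})$ a finitely generated projective right $\mathcal{A}$-module satisfying: (1) $\mathcal{E}=\mathcal{Z}(\mathcal{E})\otimes_{\mathcal{Z}(\mathcal{A})}\mathcal{A}$; (2) $\mathcal{E}\otimes_{\mathcal{A}}\mathcal{E}=\ker(\wedge)\oplus\mathcal{F}$ with $\mathcal{F}$ a right submodule and $Q=\wedge|_{\mathcal{F}}:\mathcal{F}\to\Omega^2(\mathcal{A})$ a right $\mathcal{A}$-linear isomorphism; (3) $\sigma(\omega\otimes_{\mathcal{A}}\eta)=\eta\otimes_{\mathcal{A}}\omega$ for all $\omega,\eta\in\mathcal{Z}(\mathcal{E})$. Then: (a) the map $\sigma$, and hence $P_{\rm sym}$, is $\mathcal{A}$-$\mathcal{A}$-bilinear; (b) the map $Q:\mathcal{F}\to\Omega^2(\mathcal{A})$ is an $\mathcal{A}$-$\mathcal{A}$-bilinear isomorphism.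
   Context: A differential calculus: $\Omega(\mathcal{A})=\oplus_{j\ge0}\Omega^j(\mathcal{A})$, $\Omega^0=\mathcal{A}$, bimodules $\Omega^j$, an $\mathcal{A}$-bimodule product $\wedge$ adding degrees, $d$ of degree one with $d^2=0$ and the graded Leibniz rule, $\Omega^j$ right-spanned by $da_0\wedge\cdots\wedge da_{j-1}$. $\wedge:\mathcal{E}\otimes_{\mathcal{A}}\mathcal{E}\to\Omega^2(\mathcal{A})$ is the induced product. $P_{\rm sym}$ is the idempotent on $\mathcal{E}\otimes_{\mathcal{A}}\mathcal{E}$ with image $\ker\wedge$ and kernel $\mathcal{F}$, and $\sigma=2P_{\rm sym}-1$. For a bimodule $\mathcal{M}$, $\mathcal{Z}(\mathcal{M})=\{m:am=ma\ \forall a\in\mathcal{A}\}$; $\mathcal{Z}(\mathcal{A})$ is the center of $\mathcal{A}$. Condition (1) means the multiplication map $\mathcal{Z}(\mathcal{E})\otimes_{\mathcal{Z}(\mathcal{A})}\mathcal{A}\to\mathcal{E}$ is an isomorphism. *)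

theory Defs
  imports Complex_Main "HOL-Library.Poly_Mapping"
begin

definition centre :: "'a::ring_1 set" where
  "centre = {z. \<forall>a. z * a = a * z}"

text \<open>A unital complex algebra: a ring together with a unital ring homomorphism
  from the complex numbers into its centre (the scalar multiplication).\<close>
definition complex_alg :: "(complex \<Rightarrow> 'a::ring_1) \<Rightarrow> bool" where
  "complex_alg \<kappa> \<longleftrightarrow> \<kappa> 1 = 1 \<and> (\<forall>x y. \<kappa> (x + y) = \<kappa> x + \<kappa> y \<and> \<kappa> (x * y) = \<kappa> x * \<kappa> y)
     \<and> (\<forall>c a. \<kappa> c * a = a * \<kappa> c)"

definition subgrp :: "'m::ab_group_add set \<Rightarrow> bool" where
  "subgrp M \<longleftrightarrow> 0 \<in> M \<and> (\<forall>x\<in>M. - x \<in> M \<and> (\<forall>y\<in>M. x + y \<in> M))"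

definition right_mod :: "'m::ab_group_add set \<Rightarrow> ('m \<Rightarrow> 'a::ring_1 \<Rightarrow> 'm) \<Rightarrow> bool" where
  "right_mod M r \<longleftrightarrow> subgrp M \<and> (\<forall>x\<in>M. \<forall>a. r x a \<in> M)
     \<and> (\<forall>x\<in>M. \<forall>y\<in>M. \<forall>a. r (x + y) a = r x a + r y a)
     \<and> (\<forall>x\<in>M. \<forall>a b. r x (a + b) = r x a + r x b \<and> r x (a * b) = r (r x a) b)
     \<and> (\<forall>x\<in>M. r x 1 = x)"

definition left_mod :: "'m::ab_group_add set \<Rightarrow> ('a::ring_1 \<Rightarrow> 'm \<Rightarrow> 'm) \<Rightarrow> bool" where
  "left_mod M l \<longleftrightarrow> subgrp M \<and> (\<forall>x\<in>M. \<forall>a. l a x \<in> M)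
     \<and> (\<forall>x\<in>M. \<forall>y\<in>M. \<forall>a. l a (x + y) = l a x + l a y)
     \<and> (\<forall>x\<in>M. \<forall>a b. l (a + b) x = l a x + l b x \<and> l (a * b) x = l a (l b x))
     \<and> (\<forall>x\<in>M. l 1 x = x)"

definition bimod :: "'m::ab_group_add set \<Rightarrow> ('a::ring_1 \<Rightarrow> 'm \<Rightarrow> 'm) \<Rightarrow> ('m \<Rightarrow> 'a \<Rightarrow> 'm) \<Rightarrow> bool" where
  "bimod M l r \<longleftrightarrow> left_mod M l \<and> right_mod M r \<and> (\<forall>x\<in>M. \<forall>a b. r (l a x) b = l a (r x b))"

text \<open>Finitely generated projective right module: a retract (direct summand) of a
  free right module of finite rank n, realised as the functions nat => 'a vanishing
  from n on, with componentwise right action.\<close>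
definition fg_projective_right :: "'m::ab_group_add set \<Rightarrow> ('m \<Rightarrow> 'a::ring_1 \<Rightarrow> 'm) \<Rightarrow> bool" where
  "fg_projective_right M r \<longleftrightarrow> right_mod M r \<and>
     (\<exists>(n::nat) (s::'m \<Rightarrow> nat \<Rightarrow> 'a) (p::(nat \<Rightarrow> 'a) \<Rightarrow> 'm).
        (\<forall>x\<in>M. \<forall>i\<ge>n. s x i = 0)
      \<and> (\<forall>x\<in>M. \<forall>y\<in>M. s (x + y) = (\<lambda>i. s x i + s y i))
      \<and> (\<forall>x\<in>M. \<forall>a. s (r x a) = (\<lambda>i. s x i * a))
      \<and> (\<forall>v. (\<forall>i\<ge>n. v i = 0) \<longrightarrow> p v \<in> M)
      \<and> (\<forall>v w. (\<forall>i\<ge>n. v i = 0) \<longrightarrow> (\<forall>i\<ge>n. w i = 0) \<longrightarrow> p (\<lambda>i. v i + w i) = p v + p w)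
      \<and> (\<forall>v a. (\<forall>i\<ge>n. v i = 0) \<longrightarrow> p (\<lambda>i. v i * a) = r (p v) a)
      \<and> (\<forall>x\<in>M. p (s x) = x))"

text \<open>Relation subgroup of the free abelian group on M x N defining the balanced
  tensor product of a right R-module M with a left R-module N.\<close>
inductive_set tensor_rel :: "'m::ab_group_add set \<Rightarrow> 'n::ab_group_add set \<Rightarrow> 'r set
    \<Rightarrow> ('m \<Rightarrow> 'r \<Rightarrow> 'm) \<Rightarrow> ('r \<Rightarrow> 'n \<Rightarrow> 'n) \<Rightarrow> ('m \<times> 'n \<Rightarrow>\<^sub>0 int) set"
  for M N R rM lN where
  zero: "0 \<in> tensor_rel M N R rM lN"
| addl: "m \<in> M \<Longrightarrow> m' \<in> M \<Longrightarrow> n \<in> N \<Longrightarrow>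
     Poly_Mapping.single (m + m', n) 1 - Poly_Mapping.single (m, n) 1 - Poly_Mapping.single (m', n) 1
       \<in> tensor_rel M N R rM lN"
| addr: "m \<in> M \<Longrightarrow> n \<in> N \<Longrightarrow> n' \<in> N \<Longrightarrow>
     Poly_Mapping.single (m, n + n') 1 - Poly_Mapping.single (m, n) 1 - Poly_Mapping.single (m, n') 1
       \<in> tensor_rel M N R rM lN"
| bal: "m \<in> M \<Longrightarrow> n \<in> N \<Longrightarrow> r \<in> R \<Longrightarrow>
     Poly_Mapping.single (rM m r, n) 1 - Poly_Mapping.single (m, lN r n) 1 \<in> tensor_rel M N R rM lN"
| diff: "x \<in> tensor_rel M N R rM lN \<Longrightarrow> y \<in> tensor_rel M N R rM lN \<Longrightarrow>
     x - y \<in> tensor_rel M N R rM lN"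

text \<open>(T, tens) is the tensor product M \<otimes>_R N: T consists of the finite sums of pure
  tensors, tens is biadditive and R-balanced, and the only relations among pure
  tensors are those forced by these rules (i.e. T is the standard quotient of the
  free abelian group on M x N by the relation subgroup).\<close>
definition tensor_product :: "'m::ab_group_add set \<Rightarrow> 'n::ab_group_add set \<Rightarrow> 'r set
    \<Rightarrow> ('m \<Rightarrow> 'r \<Rightarrow> 'm) \<Rightarrow> ('r \<Rightarrow> 'n \<Rightarrow> 'n) \<Rightarrow> 't::ab_group_add set \<Rightarrow> ('m \<Rightarrow> 'n \<Rightarrow> 't) \<Rightarrow> bool" where
  "tensor_product M N R rM lN T tens \<longleftrightarrow>
     T = {\<Sum>i<(k::nat). tens (ms i) (ns i) | k ms ns. \<forall>i<k. ms i \<in> M \<and> ns i \<in> N}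
   \<and> (\<forall>m\<in>M. \<forall>m'\<in>M. \<forall>n\<in>N. tens (m + m') n = tens m n + tens m' n)
   \<and> (\<forall>m\<in>M. \<forall>n\<in>N. \<forall>n'\<in>N. tens m (n + n') = tens m n + tens m n')
   \<and> (\<forall>m\<in>M. \<forall>n\<in>N. \<forall>r\<in>R. tens (rM m r) n = tens m (lN r n))
   \<and> (\<forall>(k::nat) ms ns. (\<forall>i<k. ms i \<in> M \<and> ns i \<in> N) \<and> (\<Sum>i<k. tens (ms i) (ns i)) = 0 \<longrightarrow>
        (\<Sum>i<k. Poly_Mapping.single (ms i, ns i) (1::int)) \<in> tensor_rel M N R rM lN)"

fun dprod :: "('a::one \<Rightarrow> 'o) \<Rightarrow> ('o \<Rightarrow> 'o \<Rightarrow> 'o) \<Rightarrow> ('o \<Rightarrow> 'o) \<Rightarrow> 'a list \<Rightarrow> 'o" where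
  "dprod \<iota> w d [] = \<iota> 1"
| "dprod \<iota> w d (a # as) = w (d (\<iota> a)) (dprod \<iota> w d as)"

text \<open>The ambient type 'o is
  \<Omega>(A) = \<oplus>_j \<Omega>^j, with \<Omega>^j = Om j; lm / rm are the A-bimodule actions,
  \<iota> identifies A with \<Omega>^0, w is the product \<wedge> and d the differential.\<close>
definition diff_calculus :: "(complex \<Rightarrow> 'a::ring_1) \<Rightarrow> (nat \<Rightarrow> 'o::ab_group_add set)
    \<Rightarrow> ('a \<Rightarrow> 'o \<Rightarrow> 'o) \<Rightarrow> ('o \<Rightarrow> 'a \<Rightarrow> 'o) \<Rightarrow> ('a \<Rightarrow> 'o) \<Rightarrow> ('o \<Rightarrow> 'o \<Rightarrow> 'o) \<Rightarrow> ('o \<Rightarrow> 'o) \<Rightarrow> bool" where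
  "diff_calculus \<kappa> Om lm rm \<iota> w d \<longleftrightarrow>
     complex_alg \<kappa>
   \<and> (\<forall>j. bimod (Om j) lm rm)
   \<and> (\<forall>j c. \<forall>x\<in>Om j. lm (\<kappa> c) x = rm x (\<kappa> c))
   \<and> (\<forall>n (x::nat \<Rightarrow> 'o). (\<forall>j<n. x j \<in> Om j) \<and> (\<Sum>j<n. x j) = 0 \<longrightarrow> (\<forall>j<n. x j = 0))
   \<and> (\<forall>y. \<exists>n (x::nat \<Rightarrow> 'o). (\<forall>j<n. x j \<in> Om j) \<and> y = (\<Sum>j<n. x j))
   \<and> bij_betw \<iota> UNIV (Om 0)
   \<and> (\<forall>a b. \<iota> (a + b) = \<iota> a + \<iota> b \<and> lm a (\<iota> b) = \<iota> (a * b) \<and> rm (\<iota> a) b = \<iota> (a * b))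
   \<and> (\<forall>x y z. w (x + y) z = w x z + w y z \<and> w x (y + z) = w x y + w x z)
   \<and> (\<forall>j k. \<forall>x\<in>Om j. \<forall>y\<in>Om k. w x y \<in> Om (j + k))
   \<and> (\<forall>j k a. \<forall>x\<in>Om j. \<forall>y\<in>Om k.
        w (lm a x) y = lm a (w x y) \<and> w (rm x a) y = w x (lm a y) \<and> w x (rm y a) = rm (w x y) a)
   \<and> (\<forall>j a. \<forall>x\<in>Om j. w (\<iota> a) x = lm a x \<and> w x (\<iota> a) = rm x a)
   \<and> (\<forall>x y. d (x + y) = d x + d y)
   \<and> (\<forall>j. \<forall>x\<in>Om j. d x \<in> Om (Suc j))
   \<and> (\<forall>x. d (d x) = 0)
   \<and> (\<forall>j k. \<forall>x\<in>Om j. \<forall>y\<in>Om k.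
        d (w x y) = w (d x) y + (if even j then w x (d y) else - w x (d y)))
   \<and> (\<forall>j c. \<forall>x\<in>Om j. d (lm (\<kappa> c) x) = lm (\<kappa> c) (d x))
   \<and> (\<forall>j. Om j = {\<Sum>i<(n::nat). rm (dprod \<iota> w d (as i)) (b i) | n as b. \<forall>i<n. length (as i) = j})"

definition central_elts :: "'m set \<Rightarrow> ('a \<Rightarrow> 'm \<Rightarrow> 'm) \<Rightarrow> ('m \<Rightarrow> 'a \<Rightarrow> 'm) \<Rightarrow> 'm set" where
  "central_elts M l r = {x\<in>M. \<forall>a. l a x = r x a}"

definition sigma_of :: "('t::ab_group_add \<Rightarrow> 't) \<Rightarrow> 't \<Rightarrow> 't" where
  "sigma_of P t = P t + P t - t"

end

theory Submission
  imports Defs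
begin

theorem proposition6p3:
  fixes \<kappa> :: "complex \<Rightarrow> 'a::ring_1"
    and Om :: "nat \<Rightarrow> 'o::ab_group_add set"
    and lm :: "'a \<Rightarrow> 'o \<Rightarrow> 'o" and rm :: "'o \<Rightarrow> 'a \<Rightarrow> 'o"
    and \<iota> :: "'a \<Rightarrow> 'o" and w :: "'o \<Rightarrow> 'o \<Rightarrow> 'o" and d :: "'o \<Rightarrow> 'o"
    and T :: "'t::ab_group_add set" and tens :: "'o \<Rightarrow> 'o \<Rightarrow> 't"
    and lT :: "'a \<Rightarrow> 't \<Rightarrow> 't" and rT :: "'t \<Rightarrow> 'a \<Rightarrow> 't"
    and wT :: "'t \<Rightarrow> 'o" and F :: "'t set" and P :: "'t \<Rightarrow> 't"
    and U :: "'u::ab_group_add set" and tensZ :: "'o \<Rightarrow> 'a \<Rightarrow> 'u" and mult :: "'u \<Rightarrow> 'o"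
  assumes calc: "diff_calculus \<kappa> Om lm rm \<iota> w d"
    and fgp: "fg_projective_right (Om 1) rm"
    \<comment> \<open>T = E \<otimes>_A E with its A-bimodule structure\<close>
    and tensT: "tensor_product (Om 1) (Om 1) UNIV rm lm T tens"
    and lT_add: "\<forall>a. \<forall>s\<in>T. \<forall>t\<in>T. lT a (s + t) = lT a s + lT a t"
    and rT_add: "\<forall>a. \<forall>s\<in>T. \<forall>t\<in>T. rT (s + t) a = rT s a + rT t a"
    and lT_tens: "\<forall>a. \<forall>x\<in>Om 1. \<forall>y\<in>Om 1. lT a (tens x y) = tens (lm a x) y"
    and rT_tens: "\<forall>a. \<forall>x\<in>Om 1. \<forall>y\<in>Om 1. rT (tens x y) a = tens x (rm y a)"
    \<comment> \<open>the induced map \<wedge> : E \<otimes>_A E \<rightarrow> \<Omega>^2\<close>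
    and wT_add: "\<forall>s\<in>T. \<forall>t\<in>T. wT (s + t) = wT s + wT t"
    and wT_tens: "\<forall>x\<in>Om 1. \<forall>y\<in>Om 1. wT (tens x y) = w x y"
    \<comment> \<open>condition (1)\<close>
    and tensU: "tensor_product (central_elts (Om 1) lm rm) (UNIV :: 'a set) centre rm (*) U tensZ"
    and mult_add: "\<forall>s\<in>U. \<forall>t\<in>U. mult (s + t) = mult s + mult t"
    and mult_tens: "\<forall>x\<in>central_elts (Om 1) lm rm. \<forall>a. mult (tensZ x a) = rm x a"
    and cond1: "bij_betw mult U (Om 1)"
    \<comment> \<open>condition (2)\<close>
    and F_sub: "F \<subseteq> T"
    and F_mod: "right_mod F rT"
    and decomp: "\<forall>t\<in>T. \<exists>k\<in>{s\<in>T. wT s = 0}. \<exists>f\<in>F. t = k + f"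
    and inter: "{s\<in>T. wT s = 0} \<inter> F = {0}"
    and Q_lin: "\<forall>a. \<forall>t\<in>F. wT (rT t a) = rm (wT t) a"
    and Q_iso: "bij_betw wT F (Om 2)"
    \<comment> \<open>P_sym: the idempotent with image ker \<wedge> and kernel F\<close>
    and P_add: "\<forall>s\<in>T. \<forall>t\<in>T. P (s + t) = P s + P t"
    and P_idem: "\<forall>t\<in>T. P (P t) = P t"
    and P_img: "P ` T = {s\<in>T. wT s = 0}"
    and P_ker: "{t\<in>T. P t = 0} = F"
    \<comment> \<open>condition (3)\<close>
    and cond3: "\<forall>\<omega>\<in>central_elts (Om 1) lm rm. \<forall>\<eta>\<in>central_elts (Om 1) lm rm.
                  sigma_of P (tens \<omega> \<eta>) = tens \<eta> \<omega>"
  shows "(\<forall>a. \<forall>t\<in>T. sigma_of P (lT a t) = lT a (sigma_of P t)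
                     \<and> sigma_of P (rT t a) = rT (sigma_of P t) a
                     \<and> P (lT a t) = lT a (P t) \<and> P (rT t a) = rT (P t) a)
       \<and> ((\<forall>a. \<forall>t\<in>F. lT a t \<in> F \<and> rT t a \<in> F
                    \<and> wT (lT a t) = lm a (wT t) \<and> wT (rT t a) = rm (wT t) a)
          \<and> bij_betw wT F (Om 2))"

proof -
  define Z where "Z = central_elts (Om 1) lm rm"
  have bim0: "\<forall>j. bimod (Om j) lm rm" using calc unfolding diff_calculus_def by (elim conjE) assumption
  have bim: "\<And>j. bimod (Om j) lm rm" using bim0 by blast
  have kap: "complex_alg \<kappa>" using calc unfolding diff_calculus_def by (elim conjE) assumption
  have w_in: "\<forall>j k. \<forall>x\<in>Om j. \<forall>y\<in>Om k. w x y \<in> Om (j + k)" using calc unfolding diff_calculus_def by (elim conjE) assumption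
  have w_lin: "\<forall>j k a. \<forall>x\<in>Om j. \<forall>y\<in>Om k.
        w (lm a x) y = lm a (w x y) \<and> w (rm x a) y = w x (lm a y) \<and> w x (rm y a) = rm (w x y) a"
    using calc unfolding diff_calculus_def by (elim conjE) assumption
  have lmod: "\<And>j. left_mod (Om j) lm" and rmod: "\<And>j. right_mod (Om j) rm"
    and lrcomm: "\<And>j. \<forall>x\<in>Om j. \<forall>a b. rm (lm a x) b = lm a (rm x b)"
    using bim unfolding bimod_def by blast+
  have sg: "\<And>j. subgrp (Om j)" using lmod unfolding left_mod_def by blast
  have O0: "\<And>j. 0 \<in> Om j" and Oneg: "\<And>j x. x \<in> Om j \<Longrightarrow> - x \<in> Om j"
    and Oadd: "\<And>j x y. x \<in> Om j \<Longrightarrow> y \<in> Om j \<Longrightarrow> x + y \<in> Om j"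
    using sg unfolding subgrp_def by blast+
  have lm_in: "\<And>j x a. x \<in> Om j \<Longrightarrow> lm a x \<in> Om j"
    and lm_add: "\<And>j x y a. x \<in> Om j \<Longrightarrow> y \<in> Om j \<Longrightarrow> lm a (x + y) = lm a x + lm a y"
    and lm_add2: "\<And>j x a b. x \<in> Om j \<Longrightarrow> lm (a + b) x = lm a x + lm b x"
    and lm_mult: "\<And>j x a b. x \<in> Om j \<Longrightarrow> lm (a * b) x = lm a (lm b x)"
    and lm_1: "\<And>j x. x \<in> Om j \<Longrightarrow> lm 1 x = x"
    using lmod unfolding left_mod_def by blast+
  have rm_in: "\<And>j x a. x \<in> Om j \<Longrightarrow> rm x a \<in> Om j"
    and rm_add: "\<And>j x y a. x \<in> Om j \<Longrightarrow> y \<in> Om j \<Longrightarrow> rm (x + y) a = rm x a + rm y a"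
    and rm_mult: "\<And>j x a b. x \<in> Om j \<Longrightarrow> rm x (a * b) = rm (rm x a) b"
    using rmod unfolding right_mod_def by blast+
  have rm_0: "\<And>a. rm 0 a = (0::'o)"
  proof -
    fix a
    have "rm (0 + 0) a = rm 0 a + rm 0 a" by (rule rm_add[OF O0 O0])
    then show "rm 0 a = (0::'o)" by simp
  qed
  have T_def: "T = {\<Sum>i<(k::nat). tens (ms i) (ns i) | k ms ns. \<forall>i<k. ms i \<in> Om 1 \<and> ns i \<in> Om 1}"
    and tens_addl: "\<forall>m\<in>Om 1. \<forall>m'\<in>Om 1. \<forall>n\<in>Om 1. tens (m + m') n = tens m n + tens m' n"
    and tens_addr: "\<forall>m\<in>Om 1. \<forall>n\<in>Om 1. \<forall>n'\<in>Om 1. tens m (n + n') = tens m n + tens m n'"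
    and tens_bal: "\<forall>m\<in>Om 1. \<forall>n\<in>Om 1. \<forall>r. tens (rm m r) n = tens m (lm r n)"
    using tensT unfolding tensor_product_def by blast+
  have U_def: "U = {\<Sum>i<(k::nat). tensZ (ms i) (ns i) | k ms ns. \<forall>i<k. ms i \<in> Z \<and> ns i \<in> (UNIV::'a set)}"
    using tensU unfolding tensor_product_def Z_def by blast
  have Z_sub: "Z \<subseteq> Om 1" and Z_c: "\<And>z a. z \<in> Z \<Longrightarrow> lm a z = rm z a"
    unfolding Z_def central_elts_def by auto
  have T0: "0 \<in> T" unfolding T_def by force
  have tens_in: "\<And>x y. x \<in> Om 1 \<Longrightarrow> y \<in> Om 1 \<Longrightarrow> tens x y \<in> T"
  proof -
    fix x y assume "x \<in> Om 1" "y \<in> Om 1"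
    then show "tens x y \<in> T" unfolding T_def
      by (rule_tac CollectI, rule_tac x=1 in exI, rule_tac x="\<lambda>_. x" in exI, rule_tac x="\<lambda>_. y" in exI) simp
  qed
  have T_sum_in: "\<And>k ms ns. \<forall>i<k. ms i \<in> Om 1 \<and> ns i \<in> Om 1 \<Longrightarrow> (\<Sum>i<(k::nat). tens (ms i) (ns i)) \<in> T"
    unfolding T_def by blast
  have P1: "\<And>Q. Q 0 \<Longrightarrow> (\<forall>s\<in>T. \<forall>t\<in>T. Q s \<longrightarrow> Q t \<longrightarrow> Q (s + t)) \<Longrightarrow>
      (\<forall>x\<in>Om 1. \<forall>y\<in>Om 1. Q (tens x y)) \<Longrightarrow> \<forall>t\<in>T. Q t"
  proof (intro ballI)
    fix Q t assume q0: "Q 0" and qa: "\<forall>s\<in>T. \<forall>t\<in>T. Q s \<longrightarrow> Q t \<longrightarrow> Q (s + t)"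
      and qg: "\<forall>x\<in>Om 1. \<forall>y\<in>Om 1. Q (tens x y)" and "t \<in> T"
    then obtain k ms ns where t: "t = (\<Sum>i<(k::nat). tens (ms i) (ns i))"
      and mn: "\<forall>i<k. ms i \<in> Om 1 \<and> ns i \<in> Om 1" unfolding T_def by blast
    have "\<forall>j\<le>k. Q (\<Sum>i<j. tens (ms i) (ns i))"
    proof (intro allI impI)
      fix j assume "j \<le> k"
      then show "Q (\<Sum>i<j. tens (ms i) (ns i))"
      proof (induction j)
        case 0 then show ?case using q0 by simp
      next
        case (Suc j)
        have a: "(\<Sum>i<j. tens (ms i) (ns i)) \<in> T" using Suc.prems mn by (intro T_sum_in) auto
        have b: "tens (ms j) (ns j) \<in> T" using Suc.prems mn by (intro tens_in) auto
        have "Q (tens (ms j) (ns j))" using Suc.prems mn qg by auto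
        then show ?case using Suc qa a b by simp
      qed
    qed
    then show "Q t" using t by simp
  qed
  have Osum: "\<And>j f k. \<forall>i<(k::nat). f i \<in> Om j \<Longrightarrow> (\<Sum>i<k. f i) \<in> Om j"
  proof -
    fix j f k assume "\<forall>i<(k::nat). f i \<in> Om j"
    then show "(\<Sum>i<k. f i) \<in> Om j" by (induction k) (auto intro: Oadd O0)
  qed
  have tens_0r: "\<And>x. x \<in> Om 1 \<Longrightarrow> tens x 0 = 0"
  proof -
    fix x assume "x \<in> Om 1"
    then have "tens x (0 + 0) = tens x 0 + tens x 0" using tens_addr O0 by blast
    then show "tens x 0 = 0" by simp
  qed
  have tens_0l: "\<And>y. y \<in> Om 1 \<Longrightarrow> tens 0 y = 0"
  proof -
    fix y assume "y \<in> Om 1"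
    then have "tens (0 + 0) y = tens 0 y + tens 0 y" using tens_addl O0 by blast
    then show "tens 0 y = 0" by simp
  qed
  have T_add1: "\<And>s x y. s \<in> T \<Longrightarrow> x \<in> Om 1 \<Longrightarrow> y \<in> Om 1 \<Longrightarrow> s + tens x y \<in> T"
  proof -
    fix s x y assume "s \<in> T" and xy: "x \<in> Om 1" "y \<in> Om 1"
    then obtain k ms ns where s: "s = (\<Sum>i<(k::nat). tens (ms i) (ns i))"
      and mn: "\<forall>i<k. ms i \<in> Om 1 \<and> ns i \<in> Om 1" unfolding T_def by blast
    have "(\<Sum>i<Suc k. tens ((ms(k:=x)) i) ((ns(k:=y)) i)) \<in> T"
      using mn xy by (intro T_sum_in) auto
    moreover have "(\<Sum>i<Suc k. tens ((ms(k:=x)) i) ((ns(k:=y)) i)) = s + tens x y"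
      unfolding s by (simp add: sum.lessThan_Suc)
    ultimately show "s + tens x y \<in> T" by simp
  qed
  have T_add: "\<forall>t\<in>T. \<forall>s\<in>T. s + t \<in> T"
  proof (rule P1)
    show "\<forall>s\<in>T. s + 0 \<in> T" by simp
    show "\<forall>s\<in>T. \<forall>t\<in>T. (\<forall>sa\<in>T. sa + s \<in> T) \<longrightarrow> (\<forall>s\<in>T. s + t \<in> T) \<longrightarrow> (\<forall>sa\<in>T. sa + (s + t) \<in> T)"
      by (metis add.assoc)
    show "\<forall>x\<in>Om 1. \<forall>y\<in>Om 1. \<forall>s\<in>T. s + tens x y \<in> T" using T_add1 by blast
  qed
  then have T_addI: "\<And>s t. s \<in> T \<Longrightarrow> t \<in> T \<Longrightarrow> s + t \<in> T" by blast
  have T_neg: "\<forall>t\<in>T. - t \<in> T"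
  proof (rule P1)
    show "- 0 \<in> T" using T0 by simp
    show "\<forall>s\<in>T. \<forall>t\<in>T. - s \<in> T \<longrightarrow> - t \<in> T \<longrightarrow> - (s + t) \<in> T"
      using T_addI by (metis minus_add_distrib)
    show "\<forall>x\<in>Om 1. \<forall>y\<in>Om 1. - tens x y \<in> T"
    proof (intro ballI)
      fix x y assume xy: "x \<in> Om 1" "y \<in> Om 1"
      then have "tens x (y + - y) = tens x y + tens x (- y)" using tens_addr Oneg by blast
      then have "tens x y + tens x (- y) = 0" using tens_0r xy by simp
      then have "- tens x y = tens x (- y)" by (rule minus_unique)
      then show "- tens x y \<in> T" using tens_in xy Oneg by simp
    qed
  qed
  then have T_negI: "\<And>t. t \<in> T \<Longrightarrow> - t \<in> T" by blast
  have T_diffI: "\<And>s t. s \<in> T \<Longrightarrow> t \<in> T \<Longrightarrow> s - t \<in> T"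
    using T_addI T_negI by (metis diff_conv_add_uminus)
  have U_sum_in: "\<And>k ms ns. \<forall>i<k. ms i \<in> Z \<Longrightarrow> (\<Sum>i<(k::nat). tensZ (ms i) (ns i)) \<in> U"
    unfolding U_def by blast
  have Edec: "\<And>x. x \<in> Om 1 \<Longrightarrow> \<exists>k zs as. (\<forall>i<(k::nat). zs i \<in> Z) \<and> x = (\<Sum>i<k. rm (zs i) (as i))"
  proof -
    fix x assume "x \<in> Om 1"
    then obtain u where u: "u \<in> U" "x = mult u" using cond1 unfolding bij_betw_def by blast
    then obtain k ms ns where uu: "u = (\<Sum>i<(k::nat). tensZ (ms i) (ns i))"
      and mn: "\<forall>i<k. ms i \<in> Z" unfolding U_def by blast
    have "\<forall>j\<le>k. mult (\<Sum>i<j. tensZ (ms i) (ns i)) = (\<Sum>i<j. rm (ms i) (ns i))"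
    proof (intro allI impI)
      fix j assume "j \<le> k"
      then show "mult (\<Sum>i<j. tensZ (ms i) (ns i)) = (\<Sum>i<j. rm (ms i) (ns i))"
      proof (induction j)
        case 0
        have "mult 0 \<in> Om 1" using cond1 U_sum_in[of 0] unfolding bij_betw_def by auto
        have "(0::'u) \<in> U" using U_sum_in[of 0] by simp
        then have "mult (0 + 0) = mult 0 + mult 0" using mult_add by blast
        then show ?case by simp
      next
        case (Suc j)
        have a: "(\<Sum>i<j. tensZ (ms i) (ns i)) \<in> U" using Suc.prems mn by (intro U_sum_in) auto
        have b: "tensZ (ms j) (ns j) \<in> U" using Suc.prems mn U_sum_in[of 1 "\<lambda>_. ms j" "\<lambda>_. ns j"] by auto
        have "mult (tensZ (ms j) (ns j)) = rm (ms j) (ns j)" using mult_tens mn Suc.prems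
          unfolding Z_def by auto
        then show ?case using Suc a b mult_add by simp
      qed
    qed
    then show "\<exists>k zs as. (\<forall>i<(k::nat). zs i \<in> Z) \<and> x = (\<Sum>i<k. rm (zs i) (as i))"
      using u uu mn by blast
  qed
  have key: "\<And>z z' a c. z \<in> Z \<Longrightarrow> z' \<in> Z \<Longrightarrow> tens (rm z a) (rm z' c) = rT (tens z z') (a * c)"
  proof -
    fix z z' a c assume z: "z \<in> Z" and z': "z' \<in> Z"
    have zO: "z \<in> Om 1" "z' \<in> Om 1" using z z' Z_sub by auto
    have "tens (rm z a) (rm z' c) = tens z (lm a (rm z' c))" using tens_bal zO rm_in by blast
    also have "\<dots> = tens z (rm (lm a z') c)" using lrcomm zO by auto
    also have "\<dots> = tens z (rm (rm z' a) c)" using Z_c z' by simp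
    also have "\<dots> = tens z (rm z' (a * c))" using rm_mult zO by simp
    also have "\<dots> = rT (tens z z') (a * c)" using rT_tens zO by simp
    finally show "tens (rm z a) (rm z' c) = rT (tens z z') (a * c)" .
  qed
  have P2: "\<And>Q. Q 0 \<Longrightarrow> (\<forall>s\<in>T. \<forall>t\<in>T. Q s \<longrightarrow> Q t \<longrightarrow> Q (s + t)) \<Longrightarrow>
      (\<forall>z\<in>Z. \<forall>z'\<in>Z. \<forall>c. Q (rT (tens z z') c)) \<Longrightarrow> \<forall>x\<in>Om 1. \<forall>y\<in>Om 1. Q (tens x y)"
  proof -
    fix Q assume q0: "Q 0" and qa: "\<forall>s\<in>T. \<forall>t\<in>T. Q s \<longrightarrow> Q t \<longrightarrow> Q (s + t)"
      and qg: "\<forall>z\<in>Z. \<forall>z'\<in>Z. \<forall>c. Q (rT (tens z z') c)"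
    have A: "\<And>z a y. z \<in> Z \<Longrightarrow> y \<in> Om 1 \<Longrightarrow> Q (tens (rm z a) y)"
    proof -
      fix z a y assume z: "z \<in> Z" and y: "y \<in> Om 1"
      have zO: "rm z a \<in> Om 1" using z Z_sub rm_in by blast
      obtain k zs bs where zs: "\<forall>i<(k::nat). zs i \<in> Z" and yy: "y = (\<Sum>i<k. rm (zs i) (bs i))"
        using Edec[OF y] by blast
      have "\<forall>j\<le>k. Q (tens (rm z a) (\<Sum>i<j. rm (zs i) (bs i)))"
      proof (intro allI impI)
        fix j assume "j \<le> k"
        then show "Q (tens (rm z a) (\<Sum>i<j. rm (zs i) (bs i)))"
        proof (induction j)
          case 0 then show ?case using q0 tens_0r zO by simp
        next
          case (Suc j)
          have i1: "(\<Sum>i<j. rm (zs i) (bs i)) \<in> Om 1" using Suc.prems zs Z_sub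
            by (intro Osum) (auto intro!: rm_in)
          have i2: "rm (zs j) (bs j) \<in> Om 1" using Suc.prems zs Z_sub by (auto intro!: rm_in)
          have e: "tens (rm z a) (\<Sum>i<Suc j. rm (zs i) (bs i)) =
              tens (rm z a) (\<Sum>i<j. rm (zs i) (bs i)) + tens (rm z a) (rm (zs j) (bs j))"
            using tens_addr zO i1 i2 by simp
          have "Q (tens (rm z a) (rm (zs j) (bs j)))" using key[of z "zs j"] z zs Suc.prems qg by auto
          then show ?case using e Suc qa tens_in[OF zO i1] tens_in[OF zO i2] by simp
        qed
      qed
      then show "Q (tens (rm z a) y)" using yy by simp
    qed
    show "\<forall>x\<in>Om 1. \<forall>y\<in>Om 1. Q (tens x y)"
    proof (intro ballI)
      fix x y assume x: "x \<in> Om 1" and y: "y \<in> Om 1"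
      obtain k zs bs where zs: "\<forall>i<(k::nat). zs i \<in> Z" and xx: "x = (\<Sum>i<k. rm (zs i) (bs i))"
        using Edec[OF x] by blast
      have "\<forall>j\<le>k. Q (tens (\<Sum>i<j. rm (zs i) (bs i)) y)"
      proof (intro allI impI)
        fix j assume "j \<le> k"
        then show "Q (tens (\<Sum>i<j. rm (zs i) (bs i)) y)"
        proof (induction j)
          case 0 then show ?case using q0 tens_0l y by simp
        next
          case (Suc j)
          have i1: "(\<Sum>i<j. rm (zs i) (bs i)) \<in> Om 1" using Suc.prems zs Z_sub
            by (intro Osum) (auto intro!: rm_in)
          have i2: "rm (zs j) (bs j) \<in> Om 1" using Suc.prems zs Z_sub by (auto intro!: rm_in)
          have e: "tens (\<Sum>i<Suc j. rm (zs i) (bs i)) y =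
              tens (\<Sum>i<j. rm (zs i) (bs i)) y + tens (rm (zs j) (bs j)) y"
            using tens_addl y i1 i2 by simp
          have "Q (tens (rm (zs j) (bs j)) y)" using A zs Suc.prems y by auto
          then show ?case using e Suc qa tens_in[OF i1 y] tens_in[OF i2 y] by simp
        qed
      qed
      then show "Q (tens x y)" using xx by simp
    qed
  qed
  have rT_0: "\<And>a. rT 0 a = 0"
  proof -
    fix a have "rT (0 + 0) a = rT 0 a + rT 0 a" using rT_add T0 by blast
    then show "rT 0 a = 0" by simp
  qed
  have lT_0: "\<And>a. lT a 0 = 0"
  proof -
    fix a have "lT a (0 + 0) = lT a 0 + lT a 0" using lT_add T0 by blast
    then show "lT a 0 = 0" by simp
  qed
  have wT_0: "wT 0 = 0"
  proof -
    have "wT (0 + 0) = wT 0 + wT 0" using wT_add T0 by blast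
    then show "wT 0 = 0" by simp
  qed
  have P_0: "P 0 = 0"
  proof -
    have "P (0 + 0) = P 0 + P 0" using P_add T0 by blast
    then show "P 0 = 0" by simp
  qed
  have rT_in: "\<And>a. \<forall>t\<in>T. rT t a \<in> T"
  proof -
    fix a show "\<forall>t\<in>T. rT t a \<in> T"
      by (rule P1) (auto simp: rT_0 T0 rT_add T_addI rT_tens intro!: tens_in rm_in)
  qed
  have lT_in: "\<And>a. \<forall>t\<in>T. lT a t \<in> T"
  proof -
    fix a show "\<forall>t\<in>T. lT a t \<in> T"
      by (rule P1) (auto simp: lT_0 T0 lT_add T_addI lT_tens intro!: tens_in lm_in)
  qed
  have wT_in: "\<forall>t\<in>T. wT t \<in> Om 2"
  proof (rule P1)
    show "wT 0 \<in> Om 2" using wT_0 O0 by simp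
    show "\<forall>s\<in>T. \<forall>t\<in>T. wT s \<in> Om 2 \<longrightarrow> wT t \<in> Om 2 \<longrightarrow> wT (s + t) \<in> Om 2"
      using wT_add Oadd by simp
    show "\<forall>x\<in>Om 1. \<forall>y\<in>Om 1. wT (tens x y) \<in> Om 2"
      using wT_tens w_in by (metis one_add_one)
  qed
  have wT_r: "\<And>a. \<forall>t\<in>T. wT (rT t a) = rm (wT t) a"
  proof -
    fix a show "\<forall>t\<in>T. wT (rT t a) = rm (wT t) a"
    proof (rule P1)
      show "wT (rT 0 a) = rm (wT 0) a" using rT_0 wT_0 rm_0 by simp
      show "\<forall>s\<in>T. \<forall>t\<in>T. wT (rT s a) = rm (wT s) a \<longrightarrow> wT (rT t a) = rm (wT t) a
          \<longrightarrow> wT (rT (s + t) a) = rm (wT (s + t)) a"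
      proof (intro ballI impI)
        fix s t assume st: "s \<in> T" "t \<in> T" and h: "wT (rT s a) = rm (wT s) a" "wT (rT t a) = rm (wT t) a"
        have "rm (wT s + wT t) a = rm (wT s) a + rm (wT t) a" using rm_add wT_in st by blast
        then show "wT (rT (s + t) a) = rm (wT (s + t)) a" using rT_add wT_add rT_in st h by simp
      qed
      show "\<forall>x\<in>Om 1. \<forall>y\<in>Om 1. wT (rT (tens x y) a) = rm (wT (tens x y)) a"
        using rT_tens wT_tens w_lin rm_in by simp
    qed
  qed
  have wT_l: "\<And>a. \<forall>t\<in>T. wT (lT a t) = lm a (wT t)"
  proof -
    fix a
    have lm_0: "lm a (0::'o) = 0"
    proof -
      have "lm a (0 + 0) = lm a 0 + lm a (0::'o)" by (rule lm_add[OF O0 O0])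
      then show ?thesis by simp
    qed
    show "\<forall>t\<in>T. wT (lT a t) = lm a (wT t)"
    proof (rule P1)
      show "wT (lT a 0) = lm a (wT 0)" using lT_0 wT_0 lm_0 by simp
      show "\<forall>s\<in>T. \<forall>t\<in>T. wT (lT a s) = lm a (wT s) \<longrightarrow> wT (lT a t) = lm a (wT t)
          \<longrightarrow> wT (lT a (s + t)) = lm a (wT (s + t))"
      proof (intro ballI impI)
        fix s t assume st: "s \<in> T" "t \<in> T" and h: "wT (lT a s) = lm a (wT s)" "wT (lT a t) = lm a (wT t)"
        have "lm a (wT s + wT t) = lm a (wT s) + lm a (wT t)" using lm_add wT_in st by blast
        then show "wT (lT a (s + t)) = lm a (wT (s + t))" using lT_add wT_add lT_in st h by simp
      qed
      show "\<forall>x\<in>Om 1. \<forall>y\<in>Om 1. wT (lT a (tens x y)) = lm a (wT (tens x y))"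
        using lT_tens wT_tens w_lin lm_in by simp
    qed
  qed
  have lT_add2: "\<And>a b. \<forall>t\<in>T. lT (a + b) t = lT a t + lT b t"
  proof -
    fix a b show "\<forall>t\<in>T. lT (a + b) t = lT a t + lT b t"
    proof (rule P1)
      show "lT (a + b) 0 = lT a 0 + lT b 0" using lT_0 by simp
      show "\<forall>s\<in>T. \<forall>t\<in>T. lT (a + b) s = lT a s + lT b s \<longrightarrow> lT (a + b) t = lT a t + lT b t
          \<longrightarrow> lT (a + b) (s + t) = lT a (s + t) + lT b (s + t)"
        using lT_add by (simp add: algebra_simps)
      show "\<forall>x\<in>Om 1. \<forall>y\<in>Om 1. lT (a + b) (tens x y) = lT a (tens x y) + lT b (tens x y)"
        using lT_tens lm_add2 tens_addl lm_in by simp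
    qed
  qed
  have lT_1: "\<forall>t\<in>T. lT 1 t = t"
    by (rule P1) (auto simp: lT_0 lT_add lT_tens lm_1)
  have P_T: "\<And>t. t \<in> T \<Longrightarrow> P t \<in> T" using P_img by blast
  have P_fix: "\<And>s. s \<in> T \<Longrightarrow> wT s = 0 \<Longrightarrow> P s = s"
  proof -
    fix s assume "s \<in> T" "wT s = 0"
    then obtain u where "u \<in> T" "s = P u" using P_img by (metis (mono_tags, lifting) imageE mem_Collect_eq)
    then show "P s = s" using P_idem by simp
  qed
  have F_T: "\<And>f. f \<in> F \<Longrightarrow> f \<in> T \<and> P f = 0" using P_ker by blast
  have F_r: "\<And>f a. f \<in> F \<Longrightarrow> rT f a \<in> F" using F_mod unfolding right_mod_def by blast
  have P_r: "\<And>t a. t \<in> T \<Longrightarrow> P (rT t a) = rT (P t) a"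
  proof -
    fix t a assume t: "t \<in> T"
    then obtain k f where k: "k \<in> T" "wT k = 0" and f: "f \<in> F" and tkf: "t = k + f"
      using decomp by blast
    have fT: "f \<in> T" "P f = 0" using F_T f by auto
    have Pt: "P t = k" using P_add k fT P_fix tkf by simp
    have rk: "rT k a \<in> T" "wT (rT k a) = 0" using rT_in wT_r k rm_0 by auto
    have "P (rT t a) = P (rT k a) + P (rT f a)" using tkf rT_add P_add k fT rT_in by simp
    also have "\<dots> = rT k a" using P_fix[OF rk] F_T F_r f by simp
    finally show "P (rT t a) = rT (P t) a" using Pt by simp
  qed
  have sig_T: "\<And>t. t \<in> T \<Longrightarrow> sigma_of P t \<in> T"
    unfolding sigma_of_def using P_T T_addI T_diffI by simp
  have sig_add: "\<And>s t. s \<in> T \<Longrightarrow> t \<in> T \<Longrightarrow> sigma_of P (s + t) = sigma_of P s + sigma_of P t"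
    unfolding sigma_of_def using P_add by (simp add: algebra_simps)
  have sig_0: "sigma_of P 0 = 0" unfolding sigma_of_def using P_0 by simp
  have rT_diff: "\<And>x y a. x \<in> T \<Longrightarrow> y \<in> T \<Longrightarrow> rT (x - y) a = rT x a - rT y a"
  proof -
    fix x y a assume "x \<in> T" "y \<in> T"
    then have "rT ((x - y) + y) a = rT (x - y) a + rT y a" using rT_add T_diffI by blast
    then show "rT (x - y) a = rT x a - rT y a" by (simp add: algebra_simps)
  qed
  have lT_diff: "\<And>x y a. x \<in> T \<Longrightarrow> y \<in> T \<Longrightarrow> lT a (x - y) = lT a x - lT a y"
  proof -
    fix x y a assume "x \<in> T" "y \<in> T"
    then have "lT a ((x - y) + y) = lT a (x - y) + lT a y" using lT_add T_diffI by blast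
    then show "lT a (x - y) = lT a x - lT a y" by (simp add: algebra_simps)
  qed
  have sig_r: "\<And>t a. t \<in> T \<Longrightarrow> sigma_of P (rT t a) = rT (sigma_of P t) a"
  proof -
    fix t a assume t: "t \<in> T"
    have "rT (sigma_of P t) a = rT (P t + P t) a - rT t a"
      unfolding sigma_of_def using rT_diff t P_T T_addI by simp
    also have "\<dots> = rT (P t) a + rT (P t) a - rT t a" using rT_add P_T t by simp
    finally show "sigma_of P (rT t a) = rT (sigma_of P t) a"
      unfolding sigma_of_def using P_r t by simp
  qed
  have sig_l: "\<And>a. \<forall>t\<in>T. sigma_of P (lT a t) = lT a (sigma_of P t)"
  proof -
    fix a
    let ?Q = "\<lambda>t. sigma_of P (lT a t) = lT a (sigma_of P t)"
    have q0: "?Q 0" using sig_0 lT_0 by simp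
    have qa: "\<forall>s\<in>T. \<forall>t\<in>T. ?Q s \<longrightarrow> ?Q t \<longrightarrow> ?Q (s + t)"
      using lT_add sig_add lT_in sig_T by simp
    have lr: "\<And>z z' c. z \<in> Z \<Longrightarrow> z' \<in> Z \<Longrightarrow> lT a (rT (tens z z') c) = rT (tens z z') (a * c)"
    proof -
      fix z z' c assume z: "z \<in> Z" and z': "z' \<in> Z"
      have zO: "z \<in> Om 1" "z' \<in> Om 1" using z z' Z_sub by auto
      have "lT a (rT (tens z z') c) = tens (lm a z) (rm z' c)" using rT_tens lT_tens zO rm_in by simp
      also have "\<dots> = tens (rm z a) (rm z' c)" using Z_c z by simp
      finally show "lT a (rT (tens z z') c) = rT (tens z z') (a * c)" using key z z' by simp
    qed
    have qg: "\<forall>z\<in>Z. \<forall>z'\<in>Z. \<forall>c. ?Q (rT (tens z z') c)"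
    proof (intro ballI allI)
      fix z z' c assume z: "z \<in> Z" and z': "z' \<in> Z"
      have zO: "z \<in> Om 1" "z' \<in> Om 1" using z z' Z_sub by auto
      have s: "\<And>b. sigma_of P (rT (tens z z') b) = rT (tens z' z) b"
        using sig_r tens_in zO cond3 z z' unfolding Z_def by simp
      show "?Q (rT (tens z z') c)" using lr[OF z z'] lr[OF z' z] s by simp
    qed
    show "\<forall>t\<in>T. ?Q t" by (rule P1[OF q0 qa P2[OF q0 qa qg]])
  qed
  have half: "\<And>x y. x \<in> T \<Longrightarrow> y \<in> T \<Longrightarrow> x + x = y + y \<Longrightarrow> x = y"
  proof -
    fix x y assume x: "x \<in> T" and y: "y \<in> T" and e: "x + x = y + y"
    define h where "h = \<kappa> (1/2)"
    have k1: "\<kappa> 1 = 1" and kadd: "\<kappa> (1/2 + 1/2) = \<kappa> (1/2) + \<kappa> (1/2)"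
      using kap unfolding complex_alg_def by blast+
    have "(1/2 + 1/2 :: complex) = 1" by simp
    then have hh: "h + h = 1" using k1 kadd unfolding h_def by simp
    have "\<And>u. u \<in> T \<Longrightarrow> u = lT h (u + u)"
    proof -
      fix u assume u: "u \<in> T"
      have "u = lT (h + h) u" using hh lT_1 u by simp
      also have "\<dots> = lT h (u + u)" using lT_add2 lT_add u by simp
      finally show "u = lT h (u + u)" .
    qed
    then have "x = lT h (x + x)" "y = lT h (y + y)" using x y by blast+
    then show "x = y" using e by simp
  qed
  have P_l: "\<And>a t. t \<in> T \<Longrightarrow> P (lT a t) = lT a (P t)"
  proof -
    fix a t assume t: "t \<in> T"
    have lt: "lT a t \<in> T" using lT_in t by blast
    have "P (lT a t) + P (lT a t) - lT a t = lT a (P t + P t - t)"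
      using sig_l t unfolding sigma_of_def by blast
    also have "\<dots> = lT a (P t) + lT a (P t) - lT a t"
      using lT_diff lT_add t P_T T_addI by simp
    finally have "P (lT a t) + P (lT a t) = lT a (P t) + lT a (P t)" by simp
    then show "P (lT a t) = lT a (P t)" using half P_T lt lT_in t by blast
  qed
  show ?thesis
  proof (intro conjI allI ballI)
    fix a t assume "t \<in> T"
    then show "sigma_of P (lT a t) = lT a (sigma_of P t)" "sigma_of P (rT t a) = rT (sigma_of P t) a"
      "P (lT a t) = lT a (P t)" "P (rT t a) = rT (P t) a"
      using sig_l sig_r P_l P_r by auto
  next
    fix a t assume f: "t \<in> F"
    then have tT: "t \<in> T" "P t = 0" using F_T by auto
    show "lT a t \<in> F" using P_l[OF tT(1)] tT lT_0 lT_in P_ker by auto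
    show "rT t a \<in> F" using F_r f by blast
    show "wT (lT a t) = lm a (wT t)" using wT_l tT by blast
    show "wT (rT t a) = rm (wT t) a" using Q_lin f by blast
  next
    show "bij_betw wT F (Om 2)" by (rule Q_iso)
  qed
qed

end
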